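(* Let $M\ge1$, $\alpha\in(0,1)$, $R_{th}>0$ and $\varepsilon=2^{2R_{th}/(1-\alpha)}-1$. For link types $j\in\{SR,RD\}$ let IQI parameters $\xi_{t_j},\xi_{r_j}>0$, $\phi_{t_j},\phi_{r_j}\in\mathbb{R}$ be given (the same for all relays), with $\mu_{t_j}=\tfrac12(1+\xi_{t_j}e^{i\phi_{t_j}})$, $v_{t_j}=\tfrac12(1-\xi_{t_j}e^{-i\phi_{t_j}})$, $\mu_{r_j}=\tfrac12(1+\xi_{r_j}e^{-i\phi_{r_j}})$, $v_{r_j}=\tfrac12(1-\xi_{r_j}e^{i\phi_{r_j}})$, $p_j=|\mu_{t_j}\mu_{r_j}+v_{t_j}^*v_{r_j}|^2$, $q_j=|\mu_{r_j}v_{t_j}+\mu_{t_j}^*v_{r_j}|^2$, and assume $p_j-\varepsilon q_j>0$. Let $X_{SR_1},\dots,X_{SR_M},X_{R_1D},\dots,X_{R_MD}$ be independent, with $X_{SR_m}$ exponential of rate $\lambda_{SR}>0$ and $X_{R_mD}$ exponential of rate $\lambda_{RD}>0$ for all $m$. Let the estimation-error variances be $\sigma^2_{e_{SR}}=\sigma^2_{e_{RD}}=t>0$. For each $m$ define $$C^\infty_{SR_m}=\frac{1-\alpha}{2}\log_2\!\Big(1+\frac{X_{SR_m}p_{SR}}{\sigma^2_{e_{SR}}p_{SR}+X_{SR_m}q_{SR}+\sigma^2_{e_{SR}}q_{SR}}\Big),\quad C^\infty_{R_mD}=\frac{1-\alpha}{2}\log_2\!\Big(1+\frac{X_{R_mD}p_{RD}}{\sigma^2_{e_{RD}}p_{RD}+X_{R_mD}q_{RD}+\sigma^2_{e_{RD}}q_{RD}}\Big),$$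 and let $a=\arg\max_{1\le m\le M}C^\infty_{SR_m}$. Then $$\Pr\{\min(C^\infty_{SR_a},C^\infty_{R_aD})<R_{th}\}=1-\Big(1-\big(1-e^{-\lambda_{SR}H_3}\big)^M\Big)e^{-\lambda_{RD}H_4},$$ where $H_3=\dfrac{\varepsilon\sigma^2_{e_{SR}}(p_{SR}+q_{SR})}{p_{SR}-\varepsilon q_{SR}}$ and $H_4=\dfrac{\varepsilon\sigma^2_{e_{RD}}(p_{RD}+q_{RD})}{p_{RD}-\varepsilon q_{RD}}$.
   Context: Decode-and-forward relaying with $M$ relays and suboptimal relay selection: the relay $R_a$ is chosen to maximize the first-hop ($S\to R_m$) capacity. $X_j=|\hat h_j|^2$ are estimated Rayleigh channel gains, $\sigma^2_{e_j}$ channel-estimation-error variances, and $p_j,q_j$ are the I/Q-imbalance gain coefficients. The left-hand side is the asymptotic (high-SNR) outage probability; $z^*$ is complex conjugate, $i$ the imaginary unit. *)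

theory Defs
  imports "HOL-Probability.Probability"
begin

definition mu_t :: "real \<Rightarrow> real \<Rightarrow> complex" where
  "mu_t xi phi = (1 + complex_of_real xi * cis phi) / 2"
definition v_t :: "real \<Rightarrow> real \<Rightarrow> complex" where
  "v_t xi phi = (1 - complex_of_real xi * cis (- phi)) / 2"
definition mu_r :: "real \<Rightarrow> real \<Rightarrow> complex" where
  "mu_r xi phi = (1 + complex_of_real xi * cis (- phi)) / 2"
definition v_r :: "real \<Rightarrow> real \<Rightarrow> complex" where
  "v_r xi phi = (1 - complex_of_real xi * cis phi) / 2"

definition p_coef :: "real \<Rightarrow> real \<Rightarrow> real \<Rightarrow> real \<Rightarrow> real" where
  "p_coef xt pt xr pr =
     (cmod (mu_t xt pt * mu_r xr pr + cnj (v_t xt pt) * v_r xr pr))\<^sup>2"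
definition q_coef :: "real \<Rightarrow> real \<Rightarrow> real \<Rightarrow> real \<Rightarrow> real" where
  "q_coef xt pt xr pr =
     (cmod (mu_r xr pr * v_t xt pt + cnj (mu_t xt pt) * v_r xr pr))\<^sup>2"

definition cap_inf :: "real \<Rightarrow> real \<Rightarrow> real \<Rightarrow> real \<Rightarrow> real \<Rightarrow> real" where
  "cap_inf alpha p q s x = (1 - alpha) / 2 * log 2 (1 + x * p / (s * p + x * q + s * q))"

definition sel :: "(nat \<Rightarrow> 'w \<Rightarrow> real) \<Rightarrow> nat \<Rightarrow> 'w \<Rightarrow> nat" where
  "sel C M w = (LEAST m. m \<in> {1..M} \<and> (\<forall>k\<in>{1..M}. C k w \<le> C m w))"

end

theory Submission
  imports Defs
begin

lemma cap_lt:
  fixes alpha Rth eps p q t x :: real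
  assumes "0 < alpha" "alpha < 1" "Rth > 0" "eps = 2 powr (2 * Rth / (1 - alpha)) - 1"
    and "q \<ge> 0" "p - eps * q > 0" "t > 0" "x \<ge> 0"
  shows "cap_inf alpha p q t x < Rth \<longleftrightarrow> x < eps * t * (p + q) / (p - eps * q)"
proof -
  have e1: "2 powr (2 * Rth / (1 - alpha)) > 1"
  proof -
    have "0 < 2 * Rth / (1 - alpha)" using assms by simp
    from powr_less_mono[OF this, of 2] show ?thesis by simp
  qed
  hence eps: "eps > 0" using assms by simp
  have "eps * q \<ge> 0" using eps assms(5) by simp
  hence p: "p > 0" using assms by linarith
  define D where "D = t * p + x * q + t * q"
  have D: "D > 0" unfolding D_def using assms p by (simp add: add_pos_nonneg)
  have r: "x * p / D \<ge> 0" using D p assms by simp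
  have "cap_inf alpha p q t x < Rth \<longleftrightarrow> log 2 (1 + x * p / D) < 2 * Rth / (1 - alpha)"
    unfolding cap_inf_def D_def using assms by (auto simp: field_simps)
  also have "\<dots> \<longleftrightarrow> 1 + x * p / D < 2 powr (2 * Rth / (1 - alpha))"
    using r by (intro log_less_iff) auto
  also have "\<dots> \<longleftrightarrow> x * p / D < eps" using assms by auto
  also have "\<dots> \<longleftrightarrow> x * p < eps * D" using D by (simp add: pos_divide_less_eq)
  also have "\<dots> \<longleftrightarrow> x * (p - eps * q) < eps * t * (p + q)"
    unfolding D_def by (simp add: algebra_simps)
  also have "\<dots> \<longleftrightarrow> x < eps * t * (p + q) / (p - eps * q)"
    using assms by (simp add: pos_less_divide_eq)
  finally show ?thesis .
qed

lemma exp_ge: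
  assumes P: "prob_space P" and D: "distributed P lborel X (exponential_density l)"
    and l: "l > 0" and a: "a \<ge> 0"
  shows "measure P {w \<in> space P. a \<le> X w} = exp (- a * l)"
proof -
  interpret prob_space P by fact
  have Xm[measurable]: "X \<in> borel_measurable P" using distributed_measurable[OF D] by simp
  have "emeasure P (X -` {a} \<inter> space P) = (\<integral>\<^sup>+x. exponential_density l x * indicator {a} x \<partial>lborel)"
    using distributed_emeasure[OF D] by simp
  also have "\<dots> = (\<integral>\<^sup>+(x::real). 0 \<partial>lborel)"
  proof (rule nn_integral_cong_AE)
    show "AE x in lborel. ennreal (exponential_density l x * indicator {a} x) = 0"
      using AE_lborel_singleton[of a] by eventually_elim auto
  qed
  finally have z: "measure P (X -` {a} \<inter> space P) = 0" by (simp add: measure_def)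
  have "{w \<in> space P. a \<le> X w} = {w \<in> space P. a < X w} \<union> (X -` {a} \<inter> space P)" by auto
  hence "measure P {w \<in> space P. a \<le> X w} = measure P {w \<in> space P. a < X w} + measure P (X -` {a} \<inter> space P)"
    by (simp only:) (rule finite_measure_Union, auto)
  thus ?thesis using z exponential_distributedD_gt[OF D a l] by simp
qed

lemma exp_nonneg_AE:
  assumes P: "prob_space P" and D: "distributed P lborel X (exponential_density l)"
  shows "AE w in P. 0 \<le> X w"
proof -
  interpret prob_space P by fact
  show ?thesis by (subst distributed_AE2[OF D]) (auto simp: exponential_density_def)
qed

lemma Aset_meas:
  fixes Y :: "nat \<Rightarrow> 'w \<Rightarrow> real" and c :: "real \<Rightarrow> real"
  assumes Ym[measurable]: "\<And>k. k \<in> {1..M} \<Longrightarrow> Y k \<in> borel_measurable N"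
   and [measurable]: "c \<in> borel_measurable borel"
  shows "{w \<in> space N. (m \<in> {1..M} \<and> (\<forall>k\<in>{1..M}. c (Y k w) \<le> c (Y m w)) \<and>
     (\<forall>j\<in>{1..M}. j < m \<longrightarrow> \<not> (\<forall>k\<in>{1..M}. c (Y k w) \<le> c (Y j w)))) \<and> (\<exists>k\<in>{1..M}. H3 \<le> Y k w)} \<in> sets N"
  by measurable

lemma Bset_meas:
  fixes Y :: "'w \<Rightarrow> real"
  assumes Ym[measurable]: "Y \<in> borel_measurable N"
  shows "{w \<in> space N. H4 \<le> Y w} \<in> sets N"
  by measurable

lemma comp_meas:
  "(\<lambda>f. f i) \<in> borel_measurable (PiM K (\<lambda>_. (borel :: real measure)))"
proof (cases "i \<in> K")
  case True
  then show ?thesis by (rule measurable_component_singleton)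
next
  case False
  have "(\<lambda>f. undefined) \<in> borel_measurable (PiM K (\<lambda>_. (borel :: real measure)))" by simp
  moreover have "\<And>f. f \<in> space (PiM K (\<lambda>_. (borel :: real measure))) \<Longrightarrow> f i = undefined"
    using False by (auto simp: space_PiM PiE_def extensional_def)
  ultimately show ?thesis by (subst measurable_cong[where g="\<lambda>f. undefined"]) auto
qed

lemma cm: "(\<lambda>x. cap_inf alpha p q t x) \<in> borel_measurable borel"
  unfolding cap_inf_def by measurable

definition selg :: "(real \<Rightarrow> real) \<Rightarrow> nat \<Rightarrow> (nat \<Rightarrow> real) \<Rightarrow> nat" where
  "selg c M g = (LEAST m. m \<in> {1..M} \<and> (\<forall>k\<in>{1..M}. c (g k) \<le> c (g m)))"

lemma selg_ex:
  fixes M :: nat and g :: "nat \<Rightarrow> real" and c :: "real \<Rightarrow> real"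
  assumes "M \<ge> 1"
  shows "\<exists>m. m \<in> {1..M} \<and> (\<forall>k\<in>{1..M}. c (g k) \<le> c (g m))"
proof -
  let ?S = "(\<lambda>k. c (g k)) ` {1..M}"
  have "finite ?S" "?S \<noteq> {}" using assms by auto
  hence "Max ?S \<in> ?S" by (rule Max_in)
  then obtain m where m: "m \<in> {1..M}" "c (g m) = Max ?S" by auto
  have "\<forall>k\<in>{1..M}. c (g k) \<le> c (g m)" unfolding m(2) using \<open>finite ?S\<close> by auto
  with m show ?thesis by blast
qed

lemma selg_spec:
  assumes "M \<ge> 1"
  shows "selg c M g \<in> {1..M} \<and> (\<forall>k\<in>{1..M}. c (g k) \<le> c (g (selg c M g)))"
  unfolding selg_def by (rule LeastI_ex[OF selg_ex[OF assms]])

lemma selg_iff: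
  assumes "M \<ge> 1"
  shows "selg c M g = m \<longleftrightarrow> ((m \<in> {1..M} \<and> (\<forall>k\<in>{1..M}. c (g k) \<le> c (g m)) \<and>
     (\<forall>j\<in>{1..M}. j < m \<longrightarrow> \<not> (\<forall>k\<in>{1..M}. c (g k) \<le> c (g j)))))"
proof
  assume "selg c M g = m"
  moreover have "\<forall>j\<in>{1..M}. j < selg c M g \<longrightarrow> \<not> (\<forall>k\<in>{1..M}. c (g k) \<le> c (g j))"
    unfolding selg_def using not_less_Least by blast
  ultimately show "((m \<in> {1..M} \<and> (\<forall>k\<in>{1..M}. c (g k) \<le> c (g m)) \<and>
     (\<forall>j\<in>{1..M}. j < m \<longrightarrow> \<not> (\<forall>k\<in>{1..M}. c (g k) \<le> c (g j)))))"
    using selg_spec[OF assms, of c g] by blast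
next
  assume h: "((m \<in> {1..M} \<and> (\<forall>k\<in>{1..M}. c (g k) \<le> c (g m)) \<and>
     (\<forall>j\<in>{1..M}. j < m \<longrightarrow> \<not> (\<forall>k\<in>{1..M}. c (g k) \<le> c (g j)))))"
  show "selg c M g = m" unfolding selg_def
  proof (rule Least_equality)
    show "m \<in> {1..M} \<and> (\<forall>k\<in>{1..M}. c (g k) \<le> c (g m))" using h by blast
    fix y assume "y \<in> {1..M} \<and> (\<forall>k\<in>{1..M}. c (g k) \<le> c (g y))"
    then show "m \<le> y" using h by (meson not_le)
  qed
qed

theorem corollary3:
  fixes P :: "'w measure"
    and M :: nat and alpha Rth eps t lSR lRD :: real
    and xtSR ptSR xrSR prSR xtRD ptRD xrRD prRD :: real
    and XSR XRD :: "nat \<Rightarrow> 'w \<Rightarrow> real"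
  assumes "prob_space P"
    and "M \<ge> 1" and "0 < alpha" and "alpha < 1" and "Rth > 0"
    and eps_def: "eps = 2 powr (2 * Rth / (1 - alpha)) - 1"
    and "xtSR > 0" and "xrSR > 0" and "xtRD > 0" and "xrRD > 0"
    and "p_coef xtSR ptSR xrSR prSR - eps * q_coef xtSR ptSR xrSR prSR > 0"
    and "p_coef xtRD ptRD xrRD prRD - eps * q_coef xtRD ptRD xrRD prRD > 0"
    and "lSR > 0" and "lRD > 0" and "t > 0"
    and indep: "prob_space.indep_vars P (\<lambda>_. borel)
                 (\<lambda>i. case i of Inl m \<Rightarrow> XSR m | Inr m \<Rightarrow> XRD m) ({1..M} <+> {1..M})"
    and dSR: "\<And>m. m \<in> {1..M} \<Longrightarrow> distributed P lborel (XSR m) (exponential_density lSR)"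
    and dRD: "\<And>m. m \<in> {1..M} \<Longrightarrow> distributed P lborel (XRD m) (exponential_density lRD)"
  shows
   "(let pSR = p_coef xtSR ptSR xrSR prSR; qSR = q_coef xtSR ptSR xrSR prSR;
         pRD = p_coef xtRD ptRD xrRD prRD; qRD = q_coef xtRD ptRD xrRD prRD;
         CSR = (\<lambda>m w. cap_inf alpha pSR qSR t (XSR m w));
         CRD = (\<lambda>m w. cap_inf alpha pRD qRD t (XRD m w));
         H3 = eps * t * (pSR + qSR) / (pSR - eps * qSR);
         H4 = eps * t * (pRD + qRD) / (pRD - eps * qRD)
     in measure P {w \<in> space P. min (CSR (sel CSR M w) w) (CRD (sel CSR M w) w) < Rth}
        = 1 - (1 - (1 - exp (- lSR * H3)) ^ M) * exp (- lRD * H4))"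
proof -
  interpret prob_space P by fact
  have M1: "M \<ge> 1" by fact
  define pSR where "pSR = p_coef xtSR ptSR xrSR prSR"
  define qSR where "qSR = q_coef xtSR ptSR xrSR prSR"
  define pRD where "pRD = p_coef xtRD ptRD xrRD prRD"
  define qRD where "qRD = q_coef xtRD ptRD xrRD prRD"
  define c1 where "c1 = (\<lambda>x. cap_inf alpha pSR qSR t x)"
  define c2 where "c2 = (\<lambda>x. cap_inf alpha pRD qRD t x)"
  define H3 where "H3 = eps * t * (pSR + qSR) / (pSR - eps * qSR)"
  define H4 where "H4 = eps * t * (pRD + qRD) / (pRD - eps * qRD)"
  define X where "X = (\<lambda>i. case i of Inl m \<Rightarrow> XSR m | Inr m \<Rightarrow> XRD m)"
  have indX: "indep_vars (\<lambda>_. borel) X ({1..M} <+> {1..M})" using indep unfolding X_def .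
  have q0: "qSR \<ge> 0" "qRD \<ge> 0" by (simp_all add: qSR_def qRD_def q_coef_def)
  have pq: "pSR - eps * qSR > 0" "pRD - eps * qRD > 0"
    using assms(11,12) by (simp_all add: pSR_def qSR_def pRD_def qRD_def)
  have eps: "eps > 0"
  proof -
    have "0 < 2 * Rth / (1 - alpha)" using assms by simp
    from powr_less_mono[OF this, of 2] show ?thesis using eps_def by simp
  qed
  have "eps * qSR \<ge> 0" "eps * qRD \<ge> 0" using eps q0 by simp_all
  hence pp: "pSR + qSR > 0" "pRD + qRD > 0" using pq q0 by linarith+
  have H3: "H3 \<ge> 0" unfolding H3_def using eps pp pq \<open>t > 0\<close> by simp
  have H4: "H4 \<ge> 0" unfolding H4_def using eps pp pq \<open>t > 0\<close> by simp
  have lt1: "\<And>x. x \<ge> 0 \<Longrightarrow> c1 x < Rth \<longleftrightarrow> x < H3"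
    unfolding c1_def H3_def using cap_lt assms(3,4,5) eps_def q0 pq \<open>t > 0\<close> by blast
  have lt2: "\<And>x. x \<ge> 0 \<Longrightarrow> c2 x < Rth \<longleftrightarrow> x < H4"
    unfolding c2_def H4_def using cap_lt assms(3,4,5) eps_def q0 pq \<open>t > 0\<close> by blast
  have XSRm[measurable]: "XSR k \<in> borel_measurable P" if "k \<in> {1..M}" for k
    using distributed_measurable[OF dSR[OF that]] by simp
  have XRDm[measurable]: "XRD k \<in> borel_measurable P" if "k \<in> {1..M}" for k
    using distributed_measurable[OF dRD[OF that]] by simp
  have c1m[measurable]: "c1 \<in> borel_measurable borel" unfolding c1_def by (rule cm)
  have c2m[measurable]: "c2 \<in> borel_measurable borel" unfolding c2_def by (rule cm)
  define Q where "Q = (\<lambda>(g::nat\<Rightarrow>real) m. (m \<in> {1..M} \<and> (\<forall>k\<in>{1..M}. c1 (g k) \<le> c1 (g m)) \<and>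
     (\<forall>j\<in>{1..M}. j < m \<longrightarrow> \<not> (\<forall>k\<in>{1..M}. c1 (g k) \<le> c1 (g j)))))"
  have Qsel: "\<And>g m. selg c1 M g = m \<longleftrightarrow> Q g m" unfolding Q_def by (rule selg_iff[OF M1])
  define A where "A = (\<lambda>m. {w \<in> space P. Q (\<lambda>k. XSR k w) m \<and> (\<exists>k\<in>{1..M}. H3 \<le> XSR k w)})"
  define B where "B = (\<lambda>m. {w \<in> space P. H4 \<le> XRD m w})"
  define U where "U = (\<Union>m\<in>{1..M}. A m \<inter> B m)"
  define G where "G = {w \<in> space P. \<exists>k\<in>{1..M}. H3 \<le> XSR k w}"
  define E where "E = {w \<in> space P. min (c1 (XSR (selg c1 M (\<lambda>k. XSR k w)) w)) (c2 (XRD (selg c1 M (\<lambda>k. XSR k w)) w)) < Rth}"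
  have Ameas: "A m \<in> events" for m
    unfolding A_def Q_def by measurable
  have Bmeas: "B m \<in> events" if "m \<in> {1..M}" for m
    unfolding B_def using that by measurable
  have Umeas: "U \<in> events" unfolding U_def using Ameas Bmeas by auto
  have E_eq: "E = {w \<in> space P. \<exists>m\<in>{1..M}. Q (\<lambda>k. XSR k w) m \<and> min (c1 (XSR m w)) (c2 (XRD m w)) < Rth}"
  proof -
    have "(\<exists>m\<in>{1..M}. Q g m \<and> min (c1 (XSR m w)) (c2 (XRD m w)) < Rth) \<longleftrightarrow>
      min (c1 (XSR (selg c1 M g) w)) (c2 (XRD (selg c1 M g) w)) < Rth" for g w
    proof -
      have "selg c1 M g \<in> {1..M}" using selg_spec[OF M1] by blast
      moreover have "Q g (selg c1 M g)" using Qsel by blast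
      moreover have "\<And>m. Q g m \<Longrightarrow> m = selg c1 M g" using Qsel by metis
      ultimately show ?thesis by blast
    qed
    then show ?thesis unfolding E_def by simp
  qed
  have Emeas: "E \<in> events" unfolding E_eq Q_def by measurable
  have AEnn: "AE w in P. \<forall>k\<in>{1..M}. 0 \<le> XSR k w \<and> 0 \<le> XRD k w"
  proof (rule AE_finite_allI)
    fix k assume k: "k \<in> {1..M}"
    show "AE w in P. 0 \<le> XSR k w \<and> 0 \<le> XRD k w"
      using exp_nonneg_AE[OF assms(1) dSR[OF k]] exp_nonneg_AE[OF assms(1) dRD[OF k]] by eventually_elim auto
  qed simp
  have AEeq: "AE w in P. w \<in> E \<longleftrightarrow> w \<in> space P - U"
    using AEnn
  proof eventually_elim
    case (elim w)
    show ?case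
    proof (cases "w \<in> space P")
      case False
      then show ?thesis unfolding E_def by auto
    next
      case True
      define g where "g = (\<lambda>k. XSR k w)"
      define a where "a = selg c1 M g"
      have a: "a \<in> {1..M}" "\<And>k. k \<in> {1..M} \<Longrightarrow> c1 (XSR k w) \<le> c1 (XSR a w)"
        using selg_spec[OF M1, of c1 g] unfolding a_def g_def by auto
      have Qa: "\<And>m. Q g m \<longleftrightarrow> m = a" using Qsel unfolding a_def by metis
      have nn: "\<And>k. k \<in> {1..M} \<Longrightarrow> 0 \<le> XSR k w \<and> 0 \<le> XRD k w" using elim by auto
      have inE: "w \<in> E \<longleftrightarrow> XSR a w < H3 \<or> XRD a w < H4"
        using True lt1[of "XSR a w"] lt2[of "XRD a w"] nn[OF a(1)]
        unfolding E_def a_def g_def by auto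
      have inU: "w \<in> U \<longleftrightarrow> (\<exists>k\<in>{1..M}. H3 \<le> XSR k w) \<and> H4 \<le> XRD a w"
        using True a(1) Qa unfolding U_def A_def B_def g_def by auto
      have "XSR a w < H3 \<longleftrightarrow> (\<forall>k\<in>{1..M}. XSR k w < H3)"
      proof
        assume h: "XSR a w < H3"
        show "\<forall>k\<in>{1..M}. XSR k w < H3"
        proof
          fix k assume k: "k \<in> {1..M}"
          have "c1 (XSR a w) < Rth" using lt1 nn[OF a(1)] h by blast
          hence "c1 (XSR k w) < Rth" using a(2)[OF k] by linarith
          thus "XSR k w < H3" using lt1 nn[OF k] by blast
        qed
      qed (use a(1) in blast)
      then show ?thesis using inE inU True by auto
    qed
  qed
  have mE: "measure P E = 1 - measure P U"
  proof -
    have "measure P E = measure P (space P - U)"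
      by (rule measure_eq_AE[OF AEeq Emeas]) (use Umeas in auto)
    also have "\<dots> = 1 - measure P U" by (rule prob_compl[OF Umeas])
    finally show ?thesis .
  qed
  have disjA: "disjoint_family_on A {1..M}"
  proof -
    have Quniq: "\<And>g m n. Q g m \<Longrightarrow> Q g n \<Longrightarrow> m = n" using Qsel by metis
    show ?thesis unfolding disjoint_family_on_def A_def by (auto dest: Quniq)
  qed
  have mU: "measure P U = (\<Sum>m\<in>{1..M}. measure P (A m \<inter> B m))"
    unfolding U_def
  proof (rule finite_measure_finite_Union)
    show "disjoint_family_on (\<lambda>m. A m \<inter> B m) {1..M}"
      using disjA unfolding disjoint_family_on_def by blast
  qed (use Ameas Bmeas in auto)
  have UA: "(\<Union>m\<in>{1..M}. A m) = G"
  proof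
    show "(\<Union>m\<in>{1..M}. A m) \<subseteq> G" unfolding A_def G_def by auto
    show "G \<subseteq> (\<Union>m\<in>{1..M}. A m)"
    proof
      fix w assume w: "w \<in> G"
      define m where "m = selg c1 M (\<lambda>k. XSR k w)"
      have "m \<in> {1..M}" using selg_spec[OF M1] unfolding m_def by blast
      moreover have "Q (\<lambda>k. XSR k w) m" using Qsel unfolding m_def by blast
      ultimately show "w \<in> (\<Union>m\<in>{1..M}. A m)" using w unfolding A_def G_def by auto
    qed
  qed
  have mG: "measure P G = (\<Sum>m\<in>{1..M}. measure P (A m))"
    unfolding UA[symmetric]
    by (rule finite_measure_finite_Union) (use Ameas disjA in auto)
  have pk: "measure P (XSR k -` {..<H3} \<inter> space P) = 1 - exp (- H3 * lSR)" if k: "k \<in> {1..M}" for k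
  proof -
    have "XSR k -` {..<H3} \<inter> space P = space P - {w \<in> space P. H3 \<le> XSR k w}" by auto
    moreover have "{w \<in> space P. H3 \<le> XSR k w} \<in> events" using k by measurable
    ultimately show ?thesis using prob_compl exp_ge[OF assms(1) dSR[OF k] \<open>lSR > 0\<close> H3] by simp
  qed
  have mG2: "measure P G = 1 - (1 - exp (- H3 * lSR)) ^ M"
  proof -
    have Gc: "space P - G = (\<Inter>i\<in>Inl`{1..M}. X i -` {..<H3} \<inter> space P)"
      using M1 unfolding G_def X_def by force
    have "prob (\<Inter>i\<in>Inl`{1..M}. X i -` {..<H3} \<inter> space P) = (\<Prod>i\<in>Inl`{1..M}. prob (X i -` {..<H3} \<inter> space P))"
      by (rule indep_varsD[OF indX]) (use M1 in auto)
    also have "\<dots> = (\<Prod>k\<in>{1..M}. prob (XSR k -` {..<H3} \<inter> space P))"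
      by (subst prod.reindex) (auto simp: X_def)
    also have "\<dots> = (\<Prod>k\<in>{1..M}. 1 - exp (- H3 * lSR))"
      using pk by (rule prod.cong[OF refl])
    also have "\<dots> = (1 - exp (- H3 * lSR)) ^ M" by simp
    finally have "prob (space P - G) = (1 - exp (- H3 * lSR)) ^ M" using Gc by simp
    moreover have "G \<in> events" unfolding G_def by measurable
    ultimately show ?thesis using prob_compl by simp
  qed
  have mAB: "measure P (A m \<inter> B m) = measure P (A m) * exp (- H4 * lRD)" if m: "m \<in> {1..M}" for m
  proof -
    define K where "K = (\<lambda>b::bool. if b then Inl ` {1..M} else {Inr m})"
    have ind2: "indep_vars (\<lambda>b. PiM (K b) (\<lambda>_. borel)) (\<lambda>b \<omega>. restrict (\<lambda>i. X i \<omega>) (K b)) UNIV"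
      by (rule indep_vars_restrict[OF indX]) (use m in \<open>auto simp: K_def disjoint_family_on_def\<close>)
    define TA :: "(nat + nat \<Rightarrow> real) set" where "TA = {f \<in> space (PiM (Inl ` {1..M}) (\<lambda>_. borel)). (m \<in> {1..M} \<and> (\<forall>k\<in>{1..M}. c1 (f (Inl k)) \<le> c1 (f (Inl m))) \<and>
     (\<forall>j\<in>{1..M}. j < m \<longrightarrow> \<not> (\<forall>k\<in>{1..M}. c1 (f (Inl k)) \<le> c1 (f (Inl j))))) \<and> (\<exists>k\<in>{1..M}. H3 \<le> f (Inl k))}"
    define TB :: "(nat + nat \<Rightarrow> real) set" where "TB = {f \<in> space (PiM {Inr m} (\<lambda>_. borel)). H4 \<le> f (Inr m)}"
    have TA: "TA \<in> sets (PiM (Inl ` {1..M}) (\<lambda>_. borel))"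
      unfolding TA_def by (rule Aset_meas[where Y="\<lambda>k f. f (Inl k)"]) (auto intro: comp_meas)
    have TB: "TB \<in> sets (PiM {Inr m} (\<lambda>_. borel))"
      unfolding TB_def by (rule Bset_meas) (rule comp_meas)
    define T where "T = (\<lambda>b. if b then TA else TB)"
    have "prob (\<Inter>b\<in>UNIV. (\<lambda>\<omega>. restrict (\<lambda>i. X i \<omega>) (K b)) -` T b \<inter> space P) =
       (\<Prod>b\<in>UNIV. prob ((\<lambda>\<omega>. restrict (\<lambda>i. X i \<omega>) (K b)) -` T b \<inter> space P))"
      by (rule indep_varsD[OF ind2]) (use TA TB in \<open>auto simp: T_def K_def\<close>)
    moreover have "(\<lambda>\<omega>. restrict (\<lambda>i. X i \<omega>) (K True)) -` T True \<inter> space P = A m"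
      unfolding T_def K_def TA_def A_def Q_def X_def by (auto simp: space_PiM)
    moreover have "(\<lambda>\<omega>. restrict (\<lambda>i. X i \<omega>) (K False)) -` T False \<inter> space P = B m"
      unfolding T_def K_def TB_def B_def X_def by (auto simp: space_PiM)
    ultimately have "prob (A m \<inter> B m) = prob (A m) * prob (B m)"
      by (simp add: UNIV_bool Int_commute)
    moreover have "prob (B m) = exp (- H4 * lRD)"
      unfolding B_def by (rule exp_ge[OF assms(1) dRD[OF m] \<open>lRD > 0\<close> H4])
    ultimately show ?thesis by simp
  qed
  have fin: "measure P E = 1 - (1 - (1 - exp (- H3 * lSR)) ^ M) * exp (- H4 * lRD)"
    using mE mU mAB mG mG2 by (simp add: sum_distrib_right)
  have selE: "\<And>w. sel (\<lambda>m w. cap_inf alpha pSR qSR t (XSR m w)) M w = selg c1 M (\<lambda>k. XSR k w)"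
    by (simp add: sel_def selg_def c1_def)
  show ?thesis
    unfolding Let_def pSR_def[symmetric] qSR_def[symmetric] pRD_def[symmetric] qRD_def[symmetric] selE
    using fin unfolding E_def c1_def c2_def H3_def H4_def by (simp add: mult.commute)
qed

end
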